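(* Let $(G,V^\infty,T,k)$ be an instance of \textsc{OddMultiwayNodeCut} with $G$ a DAG. Let $M^*$ be a minimum-size solution chosen as follows: among all minimum-size solutions $S$, it maximizes $|r_G(S)\cup f_G(S)\cup S|$, and among those it maximizes $|r_G(S)|$. Then: - $M^*$ is thin; - for every node $v\in r_G(M^* )$, some important $v\rightarrow T$ separator is contained in $M^*$.
   Context: Paths are simple directed paths; a path is odd if it has an odd number of edges. An instance $(G,V^\infty,T,k)$ consists of a DAG $G$, protected nodes $V^\infty\subseteq V(G)$, terminals $T\subseteq V^\infty$ and $k\in\mathbb{Z}_+$. A $T$-path has both ends in $T$. A solution is a set $M\subseteq V(G)\setminus V^\infty$ intersecting every odd $T$-path. $\mathcal{R}_H(X)$ is the set of nodes reachable from $X$ in $H$, including $X$. The shadows are $f_G(M):=V(G\setminus M)\setminus\mathcal{R}_{G\setminus M}(T)$, and $r_G(M):=$ the set of $v\in V(G)\setminus M$ with no path to $T$ in $G\setminus M$. A set $M$ is thin if no $v\in M$ lies in $r_G(M\setminus\{v\})$. An $X\rightarrow Y$ separator is a set $S\subseteq V(G)\setminus V^\infty$ such that $G\setminus S$ has no $X$-to-$Y$ path. Separator $S'$ dominates separator $S$ if $|S'|\le|S|$ and $\mathcal{R}_{G\setminus S}(X)\subsetneq\mathcal{R}_{G\setminus S'}(X)$. An important separator is an inclusion-minimal separator dominated by no other separator. *)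

theory Defs
  imports Main
begin

text \<open>Deleting a node set M
  from G is modelled by replacing V by V - M (edges with an endpoint outside the
  vertex set can never be used by a path).\<close>

definition is_path :: "'a set \<Rightarrow> ('a \<times> 'a) set \<Rightarrow> 'a list \<Rightarrow> bool" where
  "is_path V E p \<longleftrightarrow> p \<noteq> [] \<and> distinct p \<and> set p \<subseteq> V \<and>
     (\<forall>i. Suc i < length p \<longrightarrow> (p ! i, p ! Suc i) \<in> E)"

definition path_len :: "'a list \<Rightarrow> nat" where
  "path_len p = length p - 1"

definition is_dag :: "'a set \<Rightarrow> ('a \<times> 'a) set \<Rightarrow> bool" where
  "is_dag V E \<longleftrightarrow> finite V \<and> E \<subseteq> V \<times> V \<and> acyclic E"

definition reach :: "'a set \<Rightarrow> ('a \<times> 'a) set \<Rightarrow> 'a set \<Rightarrow> 'a set" where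
  "reach V E X = {v. \<exists>p. is_path V E p \<and> hd p \<in> X \<and> last p = v}"

definition is_solution :: "'a set \<Rightarrow> ('a \<times> 'a) set \<Rightarrow> 'a set \<Rightarrow> 'a set \<Rightarrow> 'a set \<Rightarrow> bool" where
  "is_solution V E Vinf T M \<longleftrightarrow> M \<subseteq> V - Vinf \<and>
     (\<forall>p. is_path V E p \<and> hd p \<in> T \<and> last p \<in> T \<and> odd (path_len p) \<longrightarrow> set p \<inter> M \<noteq> {})"

definition is_min_solution :: "'a set \<Rightarrow> ('a \<times> 'a) set \<Rightarrow> 'a set \<Rightarrow> 'a set \<Rightarrow> 'a set \<Rightarrow> bool" where
  "is_min_solution V E Vinf T M \<longleftrightarrow> is_solution V E Vinf T M \<and>
     (\<forall>S. is_solution V E Vinf T S \<longrightarrow> card M \<le> card S)"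

definition fshadow :: "'a set \<Rightarrow> ('a \<times> 'a) set \<Rightarrow> 'a set \<Rightarrow> 'a set \<Rightarrow> 'a set" where
  "fshadow V E T M = (V - M) - reach (V - M) E T"

definition rshadow :: "'a set \<Rightarrow> ('a \<times> 'a) set \<Rightarrow> 'a set \<Rightarrow> 'a set \<Rightarrow> 'a set" where
  "rshadow V E T M = {v \<in> V - M. \<not> (\<exists>p. is_path (V - M) E p \<and> hd p = v \<and> last p \<in> T)}"

definition thin :: "'a set \<Rightarrow> ('a \<times> 'a) set \<Rightarrow> 'a set \<Rightarrow> 'a set \<Rightarrow> bool" where
  "thin V E T M \<longleftrightarrow> (\<forall>v\<in>M. v \<notin> rshadow V E T (M - {v}))"

definition is_separator :: "'a set \<Rightarrow> ('a \<times> 'a) set \<Rightarrow> 'a set \<Rightarrow> 'a set \<Rightarrow> 'a set \<Rightarrow> 'a set \<Rightarrow> bool" where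
  "is_separator V E Vinf X Y S \<longleftrightarrow> S \<subseteq> V - Vinf \<and>
     \<not> (\<exists>p. is_path (V - S) E p \<and> hd p \<in> X \<and> last p \<in> Y)"

definition dominates :: "'a set \<Rightarrow> ('a \<times> 'a) set \<Rightarrow> 'a set \<Rightarrow> 'a set \<Rightarrow> 'a set \<Rightarrow> bool" where
  "dominates V E X S' S \<longleftrightarrow> card S' \<le> card S \<and> reach (V - S) E X \<subset> reach (V - S') E X"

definition is_important_separator :: "'a set \<Rightarrow> ('a \<times> 'a) set \<Rightarrow> 'a set \<Rightarrow> 'a set \<Rightarrow> 'a set \<Rightarrow> 'a set \<Rightarrow> bool" where
  "is_important_separator V E Vinf X Y S \<longleftrightarrow> is_separator V E Vinf X Y S \<and>
     (\<forall>S0. S0 \<subset> S \<longrightarrow> \<not> is_separator V E Vinf X Y S0) \<and>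
     (\<forall>S'. is_separator V E Vinf X Y S' \<longrightarrow> \<not> dominates V E X S' S)"

end

theory Submission
  imports Defs
begin

definition conn :: "('a \<times> 'a) set \<Rightarrow> 'a set \<Rightarrow> 'a \<Rightarrow> 'a \<Rightarrow> bool" where
  "conn E W a b \<longleftrightarrow> a \<in> W \<and> (a, b) \<in> (Restr E W)\<^sup>*"

lemma rtrancl_Restr_in: "(a,b) \<in> (Restr E W)\<^sup>* \<Longrightarrow> a \<in> W \<Longrightarrow> b \<in> W"
  by (induction rule: rtrancl_induct) auto

lemma conn_in: "conn E W a b \<Longrightarrow> a \<in> W \<and> b \<in> W"
  unfolding conn_def using rtrancl_Restr_in by fast

lemma conn_refl: "a \<in> W \<Longrightarrow> conn E W a a"
  unfolding conn_def by simp

lemma conn_trans: "conn E W a b \<Longrightarrow> conn E W b c \<Longrightarrow> conn E W a c"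
  unfolding conn_def by auto

lemma conn_edge: "a \<in> W \<Longrightarrow> b \<in> W \<Longrightarrow> (a,b) \<in> E \<Longrightarrow> conn E W a b"
  unfolding conn_def by auto

lemma conn_mono: "W1 \<subseteq> W2 \<Longrightarrow> conn E W1 a b \<Longrightarrow> conn E W2 a b"
  unfolding conn_def
proof -
  assume "W1 \<subseteq> W2" "a \<in> W1 \<and> (a, b) \<in> (Restr E W1)\<^sup>*"
  moreover have "Restr E W1 \<subseteq> Restr E W2" using \<open>W1 \<subseteq> W2\<close> by auto
  ultimately show "a \<in> W2 \<and> (a, b) \<in> (Restr E W2)\<^sup>*" using rtrancl_mono by blast
qed

lemma conn_E: "conn E W a b \<Longrightarrow> (a,b) \<in> E\<^sup>*"
  unfolding conn_def using rtrancl_mono[of "Restr E W" E] by auto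

lemma conn_restrict:
  assumes "conn E W a b" "a \<in> W'"
    and "\<And>z. conn E W a z \<Longrightarrow> conn E W z b \<Longrightarrow> z \<in> W'"
  shows "conn E W' a b"
proof -
  have "(a,b) \<in> (Restr E W)\<^sup>*" using assms(1) unfolding conn_def by simp
  then have "a \<in> W \<longrightarrow> a \<in> W' \<longrightarrow> (\<forall>z. conn E W a z \<longrightarrow> conn E W z b \<longrightarrow> z \<in> W') \<longrightarrow> conn E W' a b"
  proof (induction rule: converse_rtrancl_induct)
    case base
    then show ?case by (simp add: conn_refl)
  next
    case (step y y')
    show ?case
    proof (intro impI)
      assume y: "y \<in> W" "y \<in> W'" and H: "\<forall>z. conn E W y z \<longrightarrow> conn E W z b \<longrightarrow> z \<in> W'"
      have y'W: "y' \<in> W" using step.hyps(1) by auto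
      have c1: "conn E W y y'" using step.hyps(1) y unfolding conn_def by auto
      have c2: "conn E W y' b" using step.hyps(2) y'W unfolding conn_def by auto
      have y'W': "y' \<in> W'" using H c1 c2 by blast
      have H': "\<forall>z. conn E W y' z \<longrightarrow> conn E W z b \<longrightarrow> z \<in> W'"
      proof (intro allI impI)
        fix z assume "conn E W y' z" "conn E W z b"
        then show "z \<in> W'" using H conn_trans[OF c1] by blast
      qed
      have cb: "conn E W' y' b" using step.IH y'W y'W' H' by blast
      have ca: "conn E W' y y'" using step.hyps(1) y y'W' by (intro conn_edge) auto
      show "conn E W' y b" using conn_trans[OF ca cb] .
    qed
  qed
  moreover have "a \<in> W" using assms(1) unfolding conn_def by simp
  moreover have "\<forall>z. conn E W a z \<longrightarrow> conn E W z b \<longrightarrow> z \<in> W'" using assms(3) by blast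
  ultimately show ?thesis using assms(2) by blast
qed

lemma path_nth_conn:
  assumes "is_path W E p" "i \<le> j" "j < length p"
  shows "conn E W (p!i) (p!j)"
  using assms(2,3)
proof (induction j)
  case 0
  then show ?case using assms(1) unfolding is_path_def by (auto intro!: conn_refl)
next
  case (Suc j)
  show ?case
  proof (cases "i = Suc j")
    case True
    then show ?thesis using assms(1) Suc.prems unfolding is_path_def by (auto intro!: conn_refl)
  next
    case False
    then have c1: "conn E W (p!i) (p!j)" using Suc by auto
    have "p!j \<in> set p" "p ! Suc j \<in> set p" using Suc.prems by auto
    then have c2: "conn E W (p!j) (p!Suc j)" using assms(1) Suc.prems unfolding is_path_def
      by (intro conn_edge) auto
    show ?thesis using conn_trans[OF c1 c2] .
  qed
qed

lemma path_mem_conn: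
  assumes "is_path W E p" "x \<in> set p"
  shows "conn E W (hd p) x \<and> conn E W x (last p)"
proof -
  obtain i where i: "i < length p" "p ! i = x" using assms(2) by (auto simp: in_set_conv_nth)
  have ne: "p \<noteq> []" using assms(1) unfolding is_path_def by simp
  have "hd p = p ! 0" using ne by (simp add: hd_conv_nth)
  moreover have "last p = p ! (length p - 1)" using ne by (simp add: last_conv_nth)
  ultimately show ?thesis using path_nth_conn[OF assms(1)] i by auto
qed

lemma conn_path:
  assumes acyc: "acyclic E" and c: "conn E W a b"
  shows "\<exists>p. is_path W E p \<and> hd p = a \<and> last p = b"
proof -
  have "(a,b) \<in> (Restr E W)\<^sup>*" using c unfolding conn_def by simp
  then have "a \<in> W \<longrightarrow> (\<exists>p. is_path W E p \<and> hd p = a \<and> last p = b \<and> (\<forall>x\<in>set p. (a,x) \<in> E\<^sup>*))"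
  proof (induction rule: converse_rtrancl_induct)
    case base
    show ?case
    proof
      assume "b \<in> W"
      then show "\<exists>p. is_path W E p \<and> hd p = b \<and> last p = b \<and> (\<forall>x\<in>set p. (b,x) \<in> E\<^sup>*)"
        by (intro exI[of _ "[b]"]) (simp add: is_path_def)
    qed
  next
    case (step y y')
    show ?case
    proof
      assume yW: "y \<in> W"
      have e: "(y,y') \<in> E" "y' \<in> W" using step.hyps(1) by auto
      then obtain p where p: "is_path W E p" "hd p = y'" "last p = b" "\<forall>x\<in>set p. (y',x) \<in> E\<^sup>*"
        using step.IH by blast
      have ne: "p \<noteq> []" using p(1) unfolding is_path_def by simp
      have ny: "y \<notin> set p"
      proof
        assume "y \<in> set p"
        then have "(y',y) \<in> E\<^sup>*" using p(4) by blast
        then have "(y,y) \<in> E\<^sup>+" using e(1) by (meson rtrancl_into_trancl2)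
        then show False using acyc unfolding acyclic_def by blast
      qed
      have "is_path W E (y # p)"
        unfolding is_path_def
      proof (intro conjI allI impI)
        show "y # p \<noteq> []" by simp
        show "distinct (y # p)" using ny p(1) unfolding is_path_def by simp
        show "set (y # p) \<subseteq> W" using yW p(1) unfolding is_path_def by simp
        fix i assume i: "Suc i < length (y # p)"
        show "((y # p) ! i, (y # p) ! Suc i) \<in> E"
        proof (cases i)
          case 0
          then show ?thesis using e(1) p(2) ne by (simp add: hd_conv_nth)
        next
          case (Suc j)
          then show ?thesis using i p(1) unfolding is_path_def by simp
        qed
      qed
      moreover have "\<forall>x\<in>set (y#p). (y,x) \<in> E\<^sup>*"
        using p(4) e(1) by (auto intro: converse_rtrancl_into_rtrancl)
      ultimately show "\<exists>q. is_path W E q \<and> hd q = y \<and> last q = b \<and> (\<forall>x\<in>set q. (y,x) \<in> E\<^sup>*)"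
        using p(3) ne by (intro exI[of _ "y # p"]) auto
    qed
  qed
  then show ?thesis using c unfolding conn_def by blast
qed

lemma path_conn:
  assumes "acyclic E"
  shows "(\<exists>p. is_path W E p \<and> hd p = a \<and> last p = b) \<longleftrightarrow> conn E W a b"
proof
  assume "\<exists>p. is_path W E p \<and> hd p = a \<and> last p = b"
  then obtain p where p: "is_path W E p" "hd p = a" "last p = b" by blast
  have "last p \<in> set p" using p(1) unfolding is_path_def by simp
  then show "conn E W a b" using path_mem_conn[OF p(1)] p(2,3) by simp
next
  assume "conn E W a b"
  then show "\<exists>p. is_path W E p \<and> hd p = a \<and> last p = b" using conn_path[OF assms] by simp
qed

lemma ex_path_T: "acyclic E \<Longrightarrow>
  (\<exists>p. is_path W E p \<and> hd p = a \<and> last p \<in> T) \<longleftrightarrow> (\<exists>t\<in>T. conn E W a t)"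
proof -
  assume ac: "acyclic E"
  have "(\<exists>p. is_path W E p \<and> hd p = a \<and> last p \<in> T) \<longleftrightarrow> (\<exists>t\<in>T. \<exists>p. is_path W E p \<and> hd p = a \<and> last p = t)"
    by blast
  also have "\<dots> \<longleftrightarrow> (\<exists>t\<in>T. conn E W a t)" using path_conn[OF ac] by simp
  finally show ?thesis .
qed

lemma reach_conn:
  assumes "acyclic E" shows "x \<in> reach W E X \<longleftrightarrow> (\<exists>a\<in>X. conn E W a x)"
proof -
  have "x \<in> reach W E X \<longleftrightarrow> (\<exists>a\<in>X. \<exists>p. is_path W E p \<and> hd p = a \<and> last p = x)"
    unfolding reach_def by blast
  also have "\<dots> \<longleftrightarrow> (\<exists>a\<in>X. conn E W a x)" using path_conn[OF assms] by simp
  finally show ?thesis .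
qed

lemma rshadow_conn:
  assumes "acyclic E" shows
   "x \<in> rshadow V E T M \<longleftrightarrow> x \<in> V \<and> x \<notin> M \<and> \<not>(\<exists>t\<in>T. conn E (V-M) x t)"
proof -
  have "x \<in> rshadow V E T M \<longleftrightarrow> x \<in> V - M \<and> \<not>(\<exists>p. is_path (V - M) E p \<and> hd p = x \<and> last p \<in> T)"
    unfolding rshadow_def by simp
  also have "\<dots> \<longleftrightarrow> x \<in> V - M \<and> \<not>(\<exists>t\<in>T. conn E (V-M) x t)"
    using ex_path_T[OF assms, of "V-M" x T] by simp
  finally show ?thesis by simp
qed

lemma fshadow_conn:
  assumes "acyclic E" shows
   "x \<in> fshadow V E T M \<longleftrightarrow> x \<in> V \<and> x \<notin> M \<and> \<not>(\<exists>t\<in>T. conn E (V-M) t x)"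
  unfolding fshadow_def using reach_conn[OF assms, of x "V-M" T] by simp

lemma sep_conn:
  assumes "acyclic E" shows
   "is_separator V E Vinf {v} T S \<longleftrightarrow> S \<subseteq> V - Vinf \<and> \<not>(\<exists>t\<in>T. conn E (V-S) v t)"
proof -
  have "is_separator V E Vinf {v} T S \<longleftrightarrow> S \<subseteq> V - Vinf \<and> \<not>(\<exists>p. is_path (V - S) E p \<and> hd p = v \<and> last p \<in> T)"
    unfolding is_separator_def by simp
  also have "\<dots> \<longleftrightarrow> S \<subseteq> V - Vinf \<and> \<not>(\<exists>t\<in>T. conn E (V-S) v t)"
    using ex_path_T[OF assms, of "V-S" v T] by simp
  finally show ?thesis .
qed


lemma thin_part:
  assumes dag: "is_dag V E" and Vinf: "Vinf \<subseteq> V"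
    and min: "is_min_solution V E Vinf T Mstar"
  shows "\<forall>w\<in>Mstar. \<exists>t\<in>T. conn E (V - (Mstar - {w})) w t"
proof
  fix w assume wM: "w \<in> Mstar"
  have finV: "finite V" and ac: "acyclic E" using dag unfolding is_dag_def by auto
  have sol: "is_solution V E Vinf T Mstar" and mc: "\<forall>S. is_solution V E Vinf T S \<longrightarrow> card Mstar \<le> card S"
    using min unfolding is_min_solution_def by auto
  have Msub: "Mstar \<subseteq> V - Vinf" using sol unfolding is_solution_def by simp
  have finM: "finite Mstar" using Msub finV finite_subset by blast
  have wV: "w \<in> V" using wM Msub by blast
  show "\<exists>t\<in>T. conn E (V - (Mstar - {w})) w t"
  proof (rule ccontr)
    assume H: "\<not> (\<exists>t\<in>T. conn E (V - (Mstar - {w})) w t)"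
    have "is_solution V E Vinf T (Mstar - {w})"
      unfolding is_solution_def
    proof (intro conjI allI impI)
      show "Mstar - {w} \<subseteq> V - Vinf" using Msub by blast
      fix p assume p: "is_path V E p \<and> hd p \<in> T \<and> last p \<in> T \<and> odd (path_len p)"
      show "set p \<inter> (Mstar - {w}) \<noteq> {}"
      proof
        assume dis: "set p \<inter> (Mstar - {w}) = {}"
        have "set p \<inter> Mstar \<noteq> {}" using sol p unfolding is_solution_def by blast
        then have wp: "w \<in> set p" using dis by blast
        have pp: "is_path (V - (Mstar - {w})) E p" using p dis unfolding is_path_def by blast
        have "conn E (V - (Mstar - {w})) w (last p)" using path_mem_conn[OF pp wp] by simp
        then show False using H p by blast
      qed
    qed
    then have "card Mstar \<le> card (Mstar - {w})" using mc by blast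
    moreover have "card (Mstar - {w}) < card Mstar" using finM wM by (rule card_Diff1_less)
    ultimately show False by simp
  qed
qed


lemma sep_part:
  assumes dag: "is_dag V E"
    and Vinf: "Vinf \<subseteq> V" and T: "T \<subseteq> Vinf"
    and min: "is_min_solution V E Vinf T Mstar"
    and max1: "\<forall>S. is_min_solution V E Vinf T S \<longrightarrow>
        card (rshadow V E T S \<union> fshadow V E T S \<union> S)
          \<le> card (rshadow V E T Mstar \<union> fshadow V E T Mstar \<union> Mstar)"
    and max2: "\<forall>S. is_min_solution V E Vinf T S \<and>
        card (rshadow V E T S \<union> fshadow V E T S \<union> S)
          = card (rshadow V E T Mstar \<union> fshadow V E T Mstar \<union> Mstar)
        \<longrightarrow> card (rshadow V E T S) \<le> card (rshadow V E T Mstar)"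
    and vr: "v \<in> rshadow V E T Mstar"
  shows "\<exists>S. is_important_separator V E Vinf {v} T S \<and> S \<subseteq> Mstar"
proof -
  have finV: "finite V" and ac: "acyclic E" using dag unfolding is_dag_def by auto
  have sol: "is_solution V E Vinf T Mstar" and mc: "\<forall>S. is_solution V E Vinf T S \<longrightarrow> card Mstar \<le> card S"
    using min unfolding is_min_solution_def by auto
  have Msub: "Mstar \<subseteq> V - Vinf" using sol unfolding is_solution_def by simp
  have finM: "finite Mstar" using Msub finV finite_subset by blast
  have thinc: "\<forall>w\<in>Mstar. \<exists>t\<in>T. conn E (V - (Mstar - {w})) w t"
    using thin_part[OF dag Vinf min] .
  have vV: "v \<in> V" and vM: "v \<notin> Mstar" and vnot: "\<not>(\<exists>t\<in>T. conn E (V-Mstar) v t)"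
    using vr unfolding rshadow_conn[OF ac] by auto
  define W where "W = V - Mstar"
  define S0 where "S0 = {w \<in> Mstar. \<exists>u. conn E W v u \<and> (u,w) \<in> E}"
  have S0M: "S0 \<subseteq> Mstar" unfolding S0_def by blast
  have finS0: "finite S0" using S0M finM finite_subset by blast
  have R0: "conn E W v x" if "conn E (V - S0) v x" for x
  proof -
    have "(v,x) \<in> (Restr E (V-S0))\<^sup>*" using that unfolding conn_def by simp
    then show "conn E W v x"
    proof (induction rule: rtrancl_induct)
      case base
      show ?case using vV vM W_def by (simp add: conn_refl)
    next
      case (step y z)
      have yz: "(y,z) \<in> E" "z \<in> V" "z \<notin> S0" using step.hyps(2) by auto
      have yW: "y \<in> W" using conn_in[OF step.IH] by simp
      have zM: "z \<notin> Mstar"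
      proof
        assume "z \<in> Mstar"
        then have "z \<in> S0" using step.IH yz(1) unfolding S0_def by blast
        then show False using yz(3) by simp
      qed
      have zW: "z \<in> W" using W_def zM yz by simp
      show ?case using conn_trans[OF step.IH conn_edge[OF yW zW yz(1)]] .
    qed
  qed
  have WS0: "W \<subseteq> V - S0" using S0M W_def by blast
  have R0': "conn E (V-S0) v x" if "conn E W v x" for x using conn_mono[OF WS0 that] .
  have sepS0: "is_separator V E Vinf {v} T S0"
    unfolding sep_conn[OF ac]
  proof
    show "S0 \<subseteq> V - Vinf" using S0M Msub by blast
    show "\<not>(\<exists>t\<in>T. conn E (V-S0) v t)"
    proof
      assume "\<exists>t\<in>T. conn E (V-S0) v t"
      then obtain t where "t \<in> T" "conn E (V-S0) v t" by blast
      then show False using R0[of t] vnot W_def by blast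
    qed
  qed
  have minS0: "\<forall>S0'. S0' \<subset> S0 \<longrightarrow> \<not> is_separator V E Vinf {v} T S0'"
  proof (intro allI impI)
    fix S'' assume sub: "S'' \<subset> S0"
    obtain w where w: "w \<in> S0" "w \<notin> S''" using sub by blast
    obtain u where u: "conn E W v u" "(u,w) \<in> E" using w(1) unfolding S0_def by blast
    have wM: "w \<in> Mstar" using w(1) S0M by blast
    have wV: "w \<in> V" using wM Msub by blast
    obtain t where t: "t \<in> T" "conn E (V - (Mstar - {w})) w t" using thinc wM by blast
    have S''M: "S'' \<subseteq> Mstar" using sub S0M by blast
    have "W \<subseteq> V - S''" using S''M W_def by blast
    then have c1: "conn E (V-S'') v u" using u(1) by (rule conn_mono)
    have uin: "u \<in> V - S''" using conn_in[OF c1] by simp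
    have c2: "conn E (V-S'') u w" using conn_edge[OF uin _ u(2)] wV w(2) by simp
    have "V - (Mstar - {w}) \<subseteq> V - S''" using S''M w(2) by blast
    then have c3: "conn E (V-S'') w t" using t(2) by (rule conn_mono)
    have "conn E (V-S'') v t" using conn_trans[OF conn_trans[OF c1 c2] c3] .
    then show "\<not> is_separator V E Vinf {v} T S''" unfolding sep_conn[OF ac] using t(1) by blast
  qed
  have nodom: "\<forall>S'. is_separator V E Vinf {v} T S' \<longrightarrow> \<not> dominates V E {v} S' S0"
  proof (intro allI impI notI)
    fix S' assume sepS': "is_separator V E Vinf {v} T S'" and dom: "dominates V E {v} S' S0"
    have S'sub: "S' \<subseteq> V - Vinf" and S'no: "\<not>(\<exists>t\<in>T. conn E (V-S') v t)"
      using sepS' unfolding sep_conn[OF ac] by auto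
    have cardS': "card S' \<le> card S0"
      and strict: "reach (V-S0) E {v} \<subset> reach (V-S') E {v}"
      using dom unfolding dominates_def by auto
    have finS': "finite S'" using S'sub finV finite_subset by blast
    have RR: "conn E (V-S') v x" if "conn E W v x" for x
    proof -
      have "x \<in> reach (V-S0) E {v}" using R0'[OF that] reach_conn[OF ac] by blast
      then have "x \<in> reach (V-S') E {v}" using strict by blast
      then show ?thesis using reach_conn[OF ac] by blast
    qed
    have F: "conn E (V-S') v w" if ww: "w \<in> S0" "w \<notin> S'" for w
    proof -
      obtain u where u: "conn E W v u" "(u,w) \<in> E" using ww(1) unfolding S0_def by blast
      have c: "conn E (V-S') v u" using RR[OF u(1)] .
      have uin: "u \<in> V - S'" using conn_in[OF c] by simp
      have win: "w \<in> V - S'" using ww S0M Msub by blast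
      show ?thesis using conn_trans[OF c conn_edge[OF uin win u(2)]] .
    qed
    have K: False if "z \<in> S0" "z \<notin> S'" "t \<in> T" "conn E (V-S') z t" for z t
      using conn_trans[OF F[OF that(1,2)] that(4)] S'no that(3) by blast
    define M' where "M' = (Mstar - S0) \<union> S'"
    have M'sub: "M' \<subseteq> V - Vinf" using Msub S'sub M'_def by blast
    have VM'S: "V - M' \<subseteq> V - S'" using M'_def by blast
    have H: "z \<notin> Mstar" if "z \<in> V - M'" "t \<in> T" "conn E (V-M') z t" for z t
    proof
      assume zM: "z \<in> Mstar"
      then have zS: "z \<in> S0" "z \<notin> S'" using that(1) M'_def by auto
      show False using K[OF zS that(2) conn_mono[OF VM'S that(3)]] .
    qed
    have K2: "conn E (V-Mstar) a b" if "t \<in> T" "conn E (V-M') a b" "conn E (V-M') b t" for a b t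
    proof (rule conn_restrict[OF that(2)])
      have "a \<in> V - M'" using conn_in[OF that(2)] by simp
      moreover have "a \<notin> Mstar" using H[OF _ that(1) conn_trans[OF that(2,3)]] calculation by blast
      ultimately show "a \<in> V - Mstar" by blast
    next
      fix z assume z: "conn E (V-M') a z" "conn E (V-M') z b"
      have "z \<in> V - M'" using conn_in[OF z(2)] by simp
      moreover have "z \<notin> Mstar" using H[OF _ that(1) conn_trans[OF z(2) that(3)]] calculation by blast
      ultimately show "z \<in> V - Mstar" by blast
    qed
    have solM': "is_solution V E Vinf T M'"
      unfolding is_solution_def
    proof (intro conjI allI impI)
      show "M' \<subseteq> V - Vinf" using M'sub .
      fix p assume p: "is_path V E p \<and> hd p \<in> T \<and> last p \<in> T \<and> odd (path_len p)"
      show "set p \<inter> M' \<noteq> {}"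
      proof
        assume dis: "set p \<inter> M' = {}"
        obtain w where w: "w \<in> set p" "w \<in> Mstar" using sol p unfolding is_solution_def by blast
        have wS: "w \<in> S0" "w \<notin> S'" using w dis M'_def by auto
        have pp: "is_path (V - M') E p" using p dis unfolding is_path_def by blast
        have "conn E (V - M') w (last p)" using path_mem_conn[OF pp w(1)] by simp
        then have cw: "conn E (V - S') w (last p)" by (rule conn_mono[OF VM'S])
        show False using K[OF wS _ cw] p by blast
      qed
    qed
    have "card M' \<le> card (Mstar - S0) + card S'" unfolding M'_def by (rule card_Un_le)
    moreover have "card (Mstar - S0) = card Mstar - card S0" using finS0 S0M by (rule card_Diff_subset)
    moreover have "card S0 \<le> card Mstar" using finM S0M by (rule card_mono)
    ultimately have cardM': "card M' \<le> card Mstar" using cardS' by linarith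
    have minM': "is_min_solution V E Vinf T M'"
      unfolding is_min_solution_def using solM' mc cardM' by auto
    define U where "U = (\<lambda>S. rshadow V E T S \<union> fshadow V E T S \<union> S)"
    have UV: "U S \<subseteq> V" if "S \<subseteq> V" for S
      unfolding U_def rshadow_def fshadow_def using that by blast
    have USub: "U Mstar \<subseteq> U M'"
    proof
      fix x assume xU: "x \<in> U Mstar"
      have xV: "x \<in> V" using xU UV Msub by blast
      show "x \<in> U M'"
      proof (rule ccontr)
        assume nx: "x \<notin> U M'"
        have xM': "x \<notin> M'" using nx U_def by blast
        have nf: "x \<notin> fshadow V E T M'" using nx U_def by simp
        have nr: "x \<notin> rshadow V E T M'" using nx U_def by simp
        have "\<exists>t0\<in>T. conn E (V-M') t0 x" using nf xV xM' unfolding fshadow_conn[OF ac] by simp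
        then obtain t0 where t0: "t0 \<in> T" "conn E (V-M') t0 x" by blast
        have "\<exists>t\<in>T. conn E (V-M') x t" using nr xV xM' unfolding rshadow_conn[OF ac] by simp
        then obtain t where t: "t \<in> T" "conn E (V-M') x t" by blast
        have tt: "conn E (V-M') t t" using conn_in[OF t(2)] by (simp add: conn_refl)
        have a1: "conn E (V-Mstar) x t" using K2[OF t(1) t(2) tt] .
        have a2: "conn E (V-Mstar) t0 x" using K2[OF t(1) t0(2) t(2)] .
        have xM: "x \<notin> Mstar" using conn_in[OF a1] by simp
        have "x \<notin> rshadow V E T Mstar" unfolding rshadow_conn[OF ac] using a1 t(1) by blast
        moreover have "x \<notin> fshadow V E T Mstar" unfolding fshadow_conn[OF ac] using a2 t0(1) by blast
        ultimately show False using xU xM U_def by blast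
      qed
    qed
    have M'V: "M' \<subseteq> V" using M'sub by blast
    have finU': "finite (U M')" using UV[OF M'V] finV finite_subset by blast
    have "card (U Mstar) \<le> card (U M')" using card_mono[OF finU' USub] .
    moreover have "card (U M') \<le> card (U Mstar)" using max1 minM' U_def by blast
    ultimately have eqU: "card (U M') = card (U Mstar)" by simp
    have le: "card (rshadow V E T M') \<le> card (rshadow V E T Mstar)"
      using max2 minM' eqU U_def by blast
    define A where "A = rshadow V E T Mstar"
    define B where "B = rshadow V E T M'"
    have finB: "finite B" unfolding B_def rshadow_def using finV by simp
    have finA: "finite A" unfolding A_def rshadow_def using finV by simp
    have AB: "A - S' \<subseteq> B"
    proof
      fix x assume x: "x \<in> A - S'"
      have xx: "x \<in> V" "x \<notin> Mstar" "\<not>(\<exists>t\<in>T. conn E (V-Mstar) x t)"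
        using x by (auto simp: A_def rshadow_conn[OF ac])
      have xM': "x \<notin> M'" using x xx M'_def by auto
      have "\<not>(\<exists>t\<in>T. conn E (V-M') x t)"
      proof
        assume "\<exists>t\<in>T. conn E (V-M') x t"
        then obtain t where t: "t \<in> T" "conn E (V-M') x t" by blast
        have tt: "conn E (V-M') t t" using conn_in[OF t(2)] by (simp add: conn_refl)
        show False using K2[OF t(1) t(2) tt] xx(3) t(1) by blast
      qed
      then show "x \<in> B" using xx xM' unfolding B_def rshadow_conn[OF ac] by blast
    qed
    have SB: "S0 - S' \<subseteq> B"
    proof
      fix w assume w: "w \<in> S0 - S'"
      have wV: "w \<in> V" using w S0M Msub by blast
      have wM': "w \<notin> M'" using w M'_def by auto
      have "\<not>(\<exists>t\<in>T. conn E (V-M') w t)"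
      proof
        assume "\<exists>t\<in>T. conn E (V-M') w t"
        then obtain t where "t \<in> T" "conn E (V-M') w t" by blast
        then show False using K[of w t] conn_mono[OF VM'S \<open>conn E (V-M') w t\<close>] w by blast
      qed
      then show "w \<in> B" using wV wM' unfolding B_def rshadow_conn[OF ac] by blast
    qed
    have AM: "A \<inter> Mstar = {}" unfolding A_def rshadow_def by blast
    have "card A < card B"
    proof (cases "S0 \<subseteq> S'")
      case True
      have "card S0 \<le> card S'" using card_mono[OF finS' True] .
      then have "S0 = S'" using card_subset_eq[OF finS' True] cardS' by simp
      then show ?thesis using strict by simp
    next
      case False
      then obtain a where a: "a \<in> S0" "a \<notin> S'" by blast
      have aM: "a \<in> Mstar" using a S0M by blast
      have aV: "a \<in> V" using aM Msub by blast
      define W2 where "W2 = V - (Mstar - {a})"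
      obtain t where t: "t \<in> T" "conn E W2 a t" using thinc aM W2_def by blast
      have nst: "\<not> conn E (V-S') a t" using K[OF a t(1)] by blast
      have "\<exists>y\<in>S'. conn E W2 a y \<and> conn E W2 y t"
      proof (rule ccontr)
        assume nn: "\<not> (\<exists>y\<in>S'. conn E W2 a y \<and> conn E W2 y t)"
        have "conn E (V - S') a t"
        proof (rule conn_restrict[OF t(2)])
          show "a \<in> V - S'" using aV a(2) by blast
        next
          fix z assume z: "conn E W2 a z" "conn E W2 z t"
          have "z \<in> W2" using conn_in[OF z(2)] by simp
          then show "z \<in> V - S'" using nn z W2_def by blast
        qed
        then show False using nst by simp
      qed
      then obtain y where y: "y \<in> S'" "conn E W2 a y" "conn E W2 y t" by blast
      have ya: "y \<noteq> a" using y(1) a(2) by blast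
      have yW2: "y \<in> W2" using conn_in[OF y(3)] by simp
      have yM: "y \<notin> Mstar" using yW2 ya W2_def by blast
      have yV: "y \<in> V" using yW2 W2_def by blast
      have apl: "(a,y) \<in> E\<^sup>+" using conn_E[OF y(2)] ya by (simp add: rtrancl_eq_or_trancl)
      have yt': "conn E (V-Mstar) y t"
      proof (rule conn_restrict[OF y(3)])
        show "y \<in> V - Mstar" using yV yM by blast
      next
        fix z assume z: "conn E W2 y z" "conn E W2 z t"
        have zW: "z \<in> W2" using conn_in[OF z(2)] by simp
        have "z \<noteq> a"
        proof
          assume "z = a"
          then have "(y,a) \<in> E\<^sup>*" using conn_E[OF z(1)] by simp
          then have "(a,a) \<in> E\<^sup>+" using trancl_rtrancl_trancl[OF apl] by blast
          then show False using ac unfolding acyclic_def by blast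
        qed
        then show "z \<in> V - Mstar" using zW W2_def by blast
      qed
      have yA: "y \<notin> A" using yt' t(1) unfolding A_def rshadow_conn[OF ac] by blast
      have yS0: "y \<notin> S0" using yM S0M by blast
      have d: "(A \<inter> S') \<union> (S0 \<inter> S') \<union> {y} \<subseteq> S'" using y(1) by blast
      have finAS: "finite (A \<inter> S')" "finite (S0 \<inter> S')" using finS' by auto
      have c1: "card ((A \<inter> S') \<union> (S0 \<inter> S')) = card (A \<inter> S') + card (S0 \<inter> S')"
        using finAS AM S0M by (intro card_Un_disjoint) auto
      have c2: "card ((A \<inter> S') \<union> (S0 \<inter> S') \<union> {y}) = card ((A \<inter> S') \<union> (S0 \<inter> S')) + 1"
        using finAS yA yS0 by simp
      have c3: "card ((A \<inter> S') \<union> (S0 \<inter> S') \<union> {y}) \<le> card S'" using card_mono[OF finS' d] .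
      have c4: "card A = card (A \<inter> S') + card (A - S')"
        using finA by (metis card_Int_Diff)
      have c5: "card S0 = card (S0 \<inter> S') + card (S0 - S')"
        using finS0 by (metis card_Int_Diff)
      have c6: "card ((A - S') \<union> (S0 - S')) = card (A - S') + card (S0 - S')"
        using finA finS0 AM S0M by (intro card_Un_disjoint) auto
      have c7: "card ((A - S') \<union> (S0 - S')) \<le> card B"
        using AB SB finB by (intro card_mono) auto
      show ?thesis using c1 c2 c3 c4 c5 c6 c7 cardS' by linarith
    qed
    then show False using le A_def B_def by simp
  qed
  have "is_important_separator V E Vinf {v} T S0"
    unfolding is_important_separator_def using sepS0 minS0 nodom by blast
  then show ?thesis using S0M by blast
qed


theorem corollary2p10:
  fixes V :: "'a set" and E :: "('a \<times> 'a) set" and Vinf T Mstar :: "'a set" and k :: nat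
  assumes dag: "is_dag V E"
    and Vinf: "Vinf \<subseteq> V" and T: "T \<subseteq> Vinf" and k: "0 < k"
    and min: "is_min_solution V E Vinf T Mstar"
    and max1: "\<forall>S. is_min_solution V E Vinf T S \<longrightarrow>
        card (rshadow V E T S \<union> fshadow V E T S \<union> S)
          \<le> card (rshadow V E T Mstar \<union> fshadow V E T Mstar \<union> Mstar)"
    and max2: "\<forall>S. is_min_solution V E Vinf T S \<and>
        card (rshadow V E T S \<union> fshadow V E T S \<union> S)
          = card (rshadow V E T Mstar \<union> fshadow V E T Mstar \<union> Mstar)
        \<longrightarrow> card (rshadow V E T S) \<le> card (rshadow V E T Mstar)"
  shows "thin V E T Mstar \<and>
    (\<forall>v \<in> rshadow V E T Mstar. \<exists>S. is_important_separator V E Vinf {v} T S \<and> S \<subseteq> Mstar)"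
proof
  have ac: "acyclic E" using dag unfolding is_dag_def by auto
  have thinc: "\<forall>w\<in>Mstar. \<exists>t\<in>T. conn E (V - (Mstar - {w})) w t"
    using thin_part[OF dag Vinf min] .
  show "thin V E T Mstar"
    unfolding thin_def
  proof
    fix w assume "w \<in> Mstar"
    then obtain t where "t \<in> T" "conn E (V - (Mstar - {w})) w t" using thinc by blast
    then show "w \<notin> rshadow V E T (Mstar - {w})" unfolding rshadow_conn[OF ac] by blast
  qed
  show "\<forall>v \<in> rshadow V E T Mstar. \<exists>S. is_important_separator V E Vinf {v} T S \<and> S \<subseteq> Mstar"
    using sep_part[OF dag Vinf T min max1 max2] by blast
qed

end
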